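(* There exist unital endomorphisms of $C^1[0,1]$ which are Riesz operators but are not power compact. For example, the endomorphism $f\mapsto f\circ\phi$ with $\phi(x)=x^2/2$ is such an endomorphism.
   Context: $C^1[0,1]$ is the Banach algebra of continuously differentiable functions on $[0,1]$ with norm $\|f\|_\infty+\|f'\|_\infty$. A bounded operator $T$ is a Riesz operator if $\lim_{n}\left[\inf\{\|T^n-K\|:K \text{ compact}\}\right]^{1/n}=0$; it is power compact if $T^N$ is compact for some positive integer $N$. *)

theory Defs
  imports "HOL-Analysis.Analysis"
begin

text \<open>Elements of C^1[0,1] are represented canonically as functions real => real
  that vanish outside [0,1], are differentiable (one-sidedly at the endpoints,
  i.e. within [0,1]) at every point of [0,1], with derivative continuous on [0,1].\<close>

definition c1deriv :: "(real \<Rightarrow> real) \<Rightarrow> real \<Rightarrow> real" where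
  "c1deriv f x = vector_derivative f (at x within {0..1})"

definition C1 :: "(real \<Rightarrow> real) set" where
  "C1 = {f. (\<forall>x\<in>{0..1}. f differentiable (at x within {0..1}))
          \<and> continuous_on {0..1} (c1deriv f)
          \<and> (\<forall>x. x \<notin> {0..1} \<longrightarrow> f x = 0)}"

definition c1norm :: "(real \<Rightarrow> real) \<Rightarrow> real" where
  "c1norm f = (SUP x\<in>{0..1}. \<bar>f x\<bar>) + (SUP x\<in>{0..1}. \<bar>c1deriv f x\<bar>)"

definition bounded_op :: "((real \<Rightarrow> real) \<Rightarrow> (real \<Rightarrow> real)) \<Rightarrow> bool" where
  "bounded_op T \<longleftrightarrow>
     (\<forall>f\<in>C1. T f \<in> C1)
   \<and> (\<forall>f\<in>C1. \<forall>g\<in>C1. \<forall>a::real. T (\<lambda>x. a * f x + g x) = (\<lambda>x. a * T f x + T g x))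
   \<and> (\<exists>C. \<forall>f\<in>C1. c1norm (T f) \<le> C * c1norm f)"

definition opnorm :: "((real \<Rightarrow> real) \<Rightarrow> (real \<Rightarrow> real)) \<Rightarrow> real" where
  "opnorm T = Sup {c1norm (T f) | f. f \<in> C1 \<and> c1norm f \<le> 1}"

definition compact_C1op :: "((real \<Rightarrow> real) \<Rightarrow> (real \<Rightarrow> real)) \<Rightarrow> bool" where
  "compact_C1op K \<longleftrightarrow> bounded_op K \<and>
     (\<forall>u::nat \<Rightarrow> real \<Rightarrow> real. (\<forall>n. u n \<in> C1 \<and> c1norm (u n) \<le> 1) \<longrightarrow>
        (\<exists>(r::nat \<Rightarrow> nat) g. strict_mono r \<and> g \<in> C1 \<and>
               (\<lambda>n. c1norm (\<lambda>x. K (u (r n)) x - g x)) \<longlonglongrightarrow> 0))"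

definition essnorm :: "((real \<Rightarrow> real) \<Rightarrow> (real \<Rightarrow> real)) \<Rightarrow> real" where
  "essnorm T = Inf {opnorm (\<lambda>f x. T f x - K f x) | K. compact_C1op K}"

definition riesz_op :: "((real \<Rightarrow> real) \<Rightarrow> (real \<Rightarrow> real)) \<Rightarrow> bool" where
  "riesz_op T \<longleftrightarrow> bounded_op T \<and> (\<lambda>n. root n (essnorm (T ^^ n))) \<longlonglongrightarrow> 0"

definition power_compact :: "((real \<Rightarrow> real) \<Rightarrow> (real \<Rightarrow> real)) \<Rightarrow> bool" where
  "power_compact T \<longleftrightarrow> (\<exists>N::nat. N > 0 \<and> compact_C1op (T ^^ N))"

definition one_C1 :: "real \<Rightarrow> real" where
  "one_C1 x = (if x \<in> {0..1} then 1 else 0)"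

definition unital_endo :: "((real \<Rightarrow> real) \<Rightarrow> (real \<Rightarrow> real)) \<Rightarrow> bool" where
  "unital_endo T \<longleftrightarrow> bounded_op T
     \<and> (\<forall>f\<in>C1. \<forall>g\<in>C1. T (\<lambda>x. f x * g x) = (\<lambda>x. T f x * T g x))
     \<and> T one_C1 = one_C1"

definition comp_op :: "(real \<Rightarrow> real) \<Rightarrow> (real \<Rightarrow> real)" where
  "comp_op f = (\<lambda>x. if x \<in> {0..1} then f (x^2 / 2) else 0)"

end

theory Submission
  imports Defs "HOL-Real_Asymp.Real_Asymp"
begin


lemma c1deriv_eq:
  assumes "x \<in> {0..1}" "(f has_vector_derivative d) (at x within {0..1})"
  shows "c1deriv f x = d"
  unfolding c1deriv_def using vector_derivative_within_cbox[of 0 1 x f d] assms by simp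

lemma C1_deriv:
  assumes "f \<in> C1" "x \<in> {0..1}"
  shows "(f has_vector_derivative c1deriv f x) (at x within {0..1})"
proof -
  have "f differentiable (at x within {0..1})" using assms unfolding C1_def by blast
  then show ?thesis unfolding c1deriv_def by (rule vector_derivative_works[THEN iffD1])
qed

lemma C1_intro:
  assumes "\<And>x. x \<in> {0..1} \<Longrightarrow> (f has_vector_derivative f' x) (at x within {0..1})"
    and "continuous_on {0..1} f'" and "\<And>x. x \<notin> {0..1} \<Longrightarrow> f x = 0"
  shows "f \<in> C1" and "\<And>x. x \<in> {0..1} \<Longrightarrow> c1deriv f x = f' x"
proof -
  show ed: "\<And>x. x \<in> {0..1} \<Longrightarrow> c1deriv f x = f' x" using assms(1) c1deriv_eq by blast
  have "continuous_on {0..1} (c1deriv f)"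
    using assms(2) by (subst continuous_on_cong[OF refl ed]) auto
  moreover have "\<forall>x\<in>{0..1}. f differentiable (at x within {0..1})"
    using assms(1) differentiableI_vector by blast
  ultimately show "f \<in> C1" unfolding C1_def using assms(3) by blast
qed

lemma C1_cont: assumes "f \<in> C1" shows "continuous_on {0..1} f"
proof -
  have "\<forall>x\<in>{0..1}. continuous (at x within {0..1}) f"
    using assms unfolding C1_def by (auto intro: differentiable_imp_continuous_within)
  then show ?thesis by (simp add: continuous_on_eq_continuous_within)
qed

lemma bdd_cont: fixes g :: "real \<Rightarrow> real" assumes "continuous_on {0..1} g" shows "bdd_above ((\<lambda>x. \<bar>g x\<bar>) ` {0..1})"
proof -
  have "compact ((\<lambda>x. \<bar>g x\<bar>) ` {0..1::real})"
    using compact_continuous_image[OF continuous_on_rabs[OF assms]] by simp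
  then show ?thesis by (intro bounded_imp_bdd_above compact_imp_bounded)
qed

lemma C1_bdd: assumes "f \<in> C1"
  shows "bdd_above ((\<lambda>x. \<bar>f x\<bar>) ` {0..1})" "bdd_above ((\<lambda>x. \<bar>c1deriv f x\<bar>) ` {0..1})"
  using bdd_cont[OF C1_cont[OF assms]] bdd_cont assms unfolding C1_def by auto

lemma C1_pt: assumes "f \<in> C1" "x \<in> {0..1}"
  shows "\<bar>f x\<bar> \<le> (SUP x\<in>{0..1}. \<bar>f x\<bar>)" "\<bar>c1deriv f x\<bar> \<le> (SUP x\<in>{0..1}. \<bar>c1deriv f x\<bar>)"
    "0 \<le> (SUP x\<in>{0..1}. \<bar>f x\<bar>)" "0 \<le> (SUP x\<in>{0..1}. \<bar>c1deriv f x\<bar>)"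
proof -
  show a: "\<bar>f x\<bar> \<le> (SUP x\<in>{0..1}. \<bar>f x\<bar>)" using C1_bdd[OF assms(1)] assms(2) by (intro cSUP_upper)
  show b: "\<bar>c1deriv f x\<bar> \<le> (SUP x\<in>{0..1}. \<bar>c1deriv f x\<bar>)" using C1_bdd[OF assms(1)] assms(2) by (intro cSUP_upper)
  show "0 \<le> (SUP x\<in>{0..1}. \<bar>f x\<bar>)" using a by linarith
  show "0 \<le> (SUP x\<in>{0..1}. \<bar>c1deriv f x\<bar>)" using b by linarith
qed

lemma C1_norm_pt: assumes "f \<in> C1" "x \<in> {0..1}"
  shows "\<bar>f x\<bar> \<le> c1norm f" "\<bar>c1deriv f x\<bar> \<le> c1norm f" "0 \<le> c1norm f"
  using C1_pt[OF assms] unfolding c1norm_def by linarith+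

lemma C1_norm_nonneg: assumes "f \<in> C1" shows "0 \<le> c1norm f"
  using C1_norm_pt[OF assms, of 0] by simp

lemma c1norm_le:
  assumes "\<And>x. x \<in> {0..1} \<Longrightarrow> (f has_vector_derivative f' x) (at x within {0..1})"
    and "\<And>x. x \<in> {0..1} \<Longrightarrow> \<bar>f x\<bar> \<le> A" and "\<And>x. x \<in> {0..1} \<Longrightarrow> \<bar>f' x\<bar> \<le> B"
  shows "c1norm f \<le> A + B"
proof -
  have "(SUP x\<in>{0..1}. \<bar>f x\<bar>) \<le> A" using assms(2) by (intro cSUP_least) auto
  moreover have "(SUP x\<in>{0..1}. \<bar>c1deriv f x\<bar>) \<le> B" using assms(3) c1deriv_eq[OF _ assms(1)]
    by (intro cSUP_least) auto
  ultimately show ?thesis unfolding c1norm_def by simp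
qed

lemma C1_diff: assumes "f \<in> C1" "g \<in> C1"
  shows "(\<lambda>x. f x - g x) \<in> C1" "\<And>x. x \<in> {0..1} \<Longrightarrow> c1deriv (\<lambda>x. f x - g x) x = c1deriv f x - c1deriv g x"
proof -
  have d: "\<And>x. x \<in> {0..1} \<Longrightarrow> ((\<lambda>x. f x - g x) has_vector_derivative c1deriv f x - c1deriv g x) (at x within {0..1})"
    using C1_deriv assms by (intro has_vector_derivative_diff) auto
  have c: "continuous_on {0..1} (\<lambda>x. c1deriv f x - c1deriv g x)"
    using assms unfolding C1_def by (intro continuous_intros) auto
  have z: "\<And>x. x \<notin> {0..1} \<Longrightarrow> f x - g x = 0" using assms unfolding C1_def by auto
  show "(\<lambda>x. f x - g x) \<in> C1" by (rule C1_intro(1)[OF d c z])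
  show "\<And>x. x \<in> {0..1} \<Longrightarrow> c1deriv (\<lambda>x. f x - g x) x = c1deriv f x - c1deriv g x"
    by (rule C1_intro(2)[OF d c z])
qed

lemma c1norm_triangle: assumes "f \<in> C1" "g \<in> C1"
  shows "c1norm (\<lambda>x. f x - g x) \<le> c1norm f + c1norm g"
proof -
  have "c1norm (\<lambda>x. f x - g x) \<le> ((SUP x\<in>{0..1}. \<bar>f x\<bar>) + (SUP x\<in>{0..1}. \<bar>g x\<bar>))
     + ((SUP x\<in>{0..1}. \<bar>c1deriv f x\<bar>) + (SUP x\<in>{0..1}. \<bar>c1deriv g x\<bar>))"
  proof (rule c1norm_le)
    fix x :: real assume x: "x \<in> {0..1}"
    show "((\<lambda>x. f x - g x) has_vector_derivative c1deriv f x - c1deriv g x) (at x within {0..1})"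
      using C1_deriv assms x by (intro has_vector_derivative_diff) auto
    show "\<bar>f x - g x\<bar> \<le> (SUP x\<in>{0..1}. \<bar>f x\<bar>) + (SUP x\<in>{0..1}. \<bar>g x\<bar>)"
      using C1_pt[OF assms(1) x] C1_pt[OF assms(2) x] by linarith
    show "\<bar>c1deriv f x - c1deriv g x\<bar> \<le> (SUP x\<in>{0..1}. \<bar>c1deriv f x\<bar>) + (SUP x\<in>{0..1}. \<bar>c1deriv g x\<bar>)"
      using C1_pt[OF assms(1) x] C1_pt[OF assms(2) x] by linarith
  qed
  then show ?thesis unfolding c1norm_def by simp
qed



definition phi :: "nat \<Rightarrow> real \<Rightarrow> real" where "phi n = (\<lambda>x. x^2/2)^^n"

fun phd :: "nat \<Rightarrow> real \<Rightarrow> real" where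
  "phd 0 x = 1"
| "phd (Suc n) x = phi n x * phd n x"

definition BB :: "nat \<Rightarrow> real" where "BB n = (1/2) powr (real n * (real n - 1) / 2)"

lemma phi_0[simp]: "phi 0 x = x" by (simp add: phi_def)
lemma phi_Suc: "phi (Suc n) x = (phi n x)^2/2" by (simp add: phi_def)
lemma phi_Suc': "phi (Suc n) x = phi n (x^2/2)" by (simp add: phi_def funpow_Suc_right del: funpow.simps)

lemma BB_0: "BB 0 = 1" by (simp add: BB_def)
lemma BB_Suc: "BB (Suc n) = BB n * (1/2)^n"
proof -
  have e: "real (Suc n) * (real (Suc n) - 1) / 2 = real n * (real n - 1) / 2 + real n"
    by (simp add: field_simps)
  have "BB (Suc n) = (1/2) powr (real n * (real n - 1) / 2 + real n)"
    unfolding BB_def by (simp only: e)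
  also have "\<dots> = BB n * (1/2) powr real n" by (simp add: BB_def powr_add)
  also have "(1/2::real) powr real n = (1/2)^n" by (simp add: powr_realpow)
  finally show ?thesis .
qed
lemma BB_pos: "0 < BB n" by (simp add: BB_def)

lemma phi_deriv: "(phi n has_real_derivative phd n x) (at x)"
proof (induction n arbitrary: x)
  case 0
  then show ?case by (simp add: phi_def)
next
  case (Suc n)
  have e: "phi (Suc n) = (\<lambda>x. (phi n x)^2/2)" by (rule ext) (simp add: phi_Suc)
  show ?case unfolding e
    by (rule derivative_eq_intros Suc refl | simp)+
qed

lemma phi_isCont: "isCont (phi n) x" using phi_deriv DERIV_isCont by blast

lemma phd_isCont: "isCont (phd n) x"
  by (induction n) (auto intro!: continuous_intros phi_isCont)

lemma phi_I: "x \<in> {0..1} \<Longrightarrow> 0 \<le> phi n x \<and> phi n x \<le> (1/2)^n"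
proof (induction n)
  case 0 then show ?case by simp
next
  case (Suc n)
  then have a: "0 \<le> phi n x" "phi n x \<le> (1/2)^n" by auto
  have "(1/2::real)^n \<le> 1" by (simp add: power_le_one)
  then have "(phi n x)^2 \<le> phi n x * (1/2)^n" using a unfolding power2_eq_square
    by (intro mult_left_mono) auto
  moreover have "phi n x * (1/2)^n \<le> (1/2)^n" using a \<open>(1/2::real)^n \<le> 1\<close>
    by (intro mult_left_le_one_le) auto
  ultimately have "(phi n x)^2 \<le> (1/2)^n" by linarith
  then show ?case using a by (simp add: phi_Suc)
qed

lemma phi_in_I: "x \<in> {0..1} \<Longrightarrow> phi n x \<in> {0..1}"
  using phi_I[of x n] by (auto intro: order_trans[OF _ power_le_one])

lemma phi_BB: "x \<in> {0..1} \<Longrightarrow> phi n x \<le> BB n \<and> 0 \<le> phd n x \<and> phd n x \<le> BB n"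
proof (induction n)
  case 0 then show ?case by (simp add: BB_0)
next
  case (Suc n)
  then have a: "phi n x \<le> BB n" "0 \<le> phd n x" "phd n x \<le> BB n" by auto
  have b: "0 \<le> phi n x" "phi n x \<le> (1/2)^n" using phi_I[OF Suc.prems] by auto
  have "phi n x * phi n x \<le> BB n * (1/2)^n"
    using BB_pos[of n] by (intro mult_mono a(1) b(2) b(1)) auto
  moreover have "(phi n x)^2/2 \<le> phi n x * phi n x" using b(1) by (simp add: power2_eq_square)
  ultimately have "(phi n x)^2/2 \<le> BB n * (1/2)^n" by linarith
  moreover have "phi n x * phd n x \<le> (1/2)^n * BB n"
    using a b by (intro mult_mono) auto
  ultimately show ?case using a b by (simp add: phi_Suc BB_Suc mult.commute)
qed

lemma phi_pos1: "0 < phi n 1"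
  by (induction n) (auto simp: phi_Suc)

lemma phd_pos1: "0 < phd n 1"
  by (induction n) (auto simp: phi_pos1)

lemma phi_lt1: "0 \<le> x \<Longrightarrow> x < 1 \<Longrightarrow> phi n x < phi n 1"
proof (induction n)
  case 0 then show ?case by simp
next
  case (Suc n)
  have "0 \<le> phi n x" using phi_I[of x n] Suc.prems by auto
  then have "(phi n x)^2 < (phi n 1)^2" using Suc by (intro power_strict_mono) auto
  then show ?case by (simp add: phi_Suc)
qed

definition PP :: "nat \<Rightarrow> (real \<Rightarrow> real) \<Rightarrow> real \<Rightarrow> real" where
  "PP n f = (\<lambda>x. if x \<in> {0..1} then f (phi n x) else 0)"

lemma comp_op_pow: "f \<in> C1 \<Longrightarrow> (comp_op ^^ n) f = PP n f"
proof (induction n)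
  case 0
  then show ?case unfolding PP_def C1_def by (auto intro!: ext)
next
  case (Suc n)
  have "\<And>x. x \<in> {0..1} \<Longrightarrow> x^2/2 \<in> {0..1::real}"
    by (auto intro: order_trans[OF power_le_one])
  then show ?case using Suc unfolding PP_def comp_op_def
    by (auto intro!: ext simp: phi_Suc')
qed

lemma PP_C1:
  assumes "f \<in> C1"
  shows "PP n f \<in> C1" "\<And>x. x \<in> {0..1} \<Longrightarrow> c1deriv (PP n f) x = c1deriv f (phi n x) * phd n x"
proof -
  have d: "(PP n f has_vector_derivative c1deriv f (phi n x) * phd n x) (at x within {0..1})"
    if x: "x \<in> {0..1}" for x
  proof -
    have p: "(phi n has_vector_derivative phd n x) (at x within {0..1})"
      using phi_deriv[of n x] by (simp add: has_real_derivative_iff_has_vector_derivative[symmetric]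
          has_field_derivative_at_within)
    have "(f has_vector_derivative c1deriv f (phi n x)) (at (phi n x) within {0..1})"
      using C1_deriv[OF assms phi_in_I[OF x]] .
    then have "(f has_vector_derivative c1deriv f (phi n x)) (at (phi n x) within phi n ` {0..1})"
      by (rule has_vector_derivative_within_subset) (auto intro: phi_in_I)
    from vector_diff_chain_within[OF p this]
    have "((f \<circ> phi n) has_vector_derivative c1deriv f (phi n x) * phd n x) (at x within {0..1})"
      by (simp add: mult.commute)
    then show ?thesis
      by (rule has_vector_derivative_transform[OF x, rotated]) (simp add: PP_def)
  qed
  have c: "continuous_on {0..1} (\<lambda>x. c1deriv f (phi n x) * phd n x)"
  proof (intro continuous_intros)
    show "continuous_on {0..1} (\<lambda>x. c1deriv f (phi n x))"
    proof (rule continuous_on_compose2[where g="c1deriv f" and f="phi n" and t="{0..1}"])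
      show "continuous_on {0..1} (c1deriv f)" using assms unfolding C1_def by blast
      show "continuous_on {0..1} (phi n)"
        by (intro continuous_at_imp_continuous_on ballI phi_isCont)
    qed (auto intro: phi_in_I)
    show "continuous_on {0..1} (phd n)"
      by (intro continuous_at_imp_continuous_on ballI phd_isCont)
  qed
  have z: "\<And>x. x \<notin> {0..1} \<Longrightarrow> PP n f x = 0" unfolding PP_def by (simp only: if_False)
  show "PP n f \<in> C1" by (rule C1_intro(1)[OF d c z])
  show "\<And>x. x \<in> {0..1} \<Longrightarrow> c1deriv (PP n f) x = c1deriv f (phi n x) * phd n x"
    by (rule C1_intro(2)[OF d c z])
qed



lemma BB_le1: "BB n \<le> 1"
proof (induction n)
  case 0 then show ?case by (simp add: BB_0)
next
  case (Suc n)
  have "BB n * (1/2)^n \<le> BB n * 1" using BB_pos[of n] by (intro mult_left_mono) (auto simp: power_le_one)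
  then show ?case using Suc by (simp add: BB_Suc)
qed

lemma PP_norm: assumes "f \<in> C1" shows "c1norm (PP n f) \<le> c1norm f"
proof -
  have "c1norm (PP n f) \<le> (SUP x\<in>{0..1}. \<bar>f x\<bar>) + (SUP x\<in>{0..1}. \<bar>c1deriv f x\<bar>)"
  proof (rule c1norm_le)
    fix x :: real assume x: "x \<in> {0..1}"
    show "(PP n f has_vector_derivative c1deriv f (phi n x) * phd n x) (at x within {0..1})"
      using C1_deriv[OF PP_C1(1)[OF assms] x] PP_C1(2)[OF assms x] by simp
    show "\<bar>PP n f x\<bar> \<le> (SUP x\<in>{0..1}. \<bar>f x\<bar>)"
      using C1_pt(1)[OF assms phi_in_I[OF x]] x by (simp add: PP_def)
    have "0 \<le> phd n x" "phd n x \<le> 1" using phi_BB[OF x, of n] BB_le1[of n] by auto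
    then have "\<bar>c1deriv f (phi n x) * phd n x\<bar> \<le> \<bar>c1deriv f (phi n x)\<bar> * 1"
      unfolding abs_mult by (intro mult_left_mono) auto
    then show "\<bar>c1deriv f (phi n x) * phd n x\<bar> \<le> (SUP x\<in>{0..1}. \<bar>c1deriv f x\<bar>)"
      using C1_pt(2)[OF assms phi_in_I[OF x, of n]] by linarith
  qed
  then show ?thesis unfolding c1norm_def .
qed

lemma comp_op_PP: "f \<in> C1 \<Longrightarrow> comp_op f = PP 1 f"
  using comp_op_pow[of f 1] by simp

lemma bounded_comp_op: "bounded_op comp_op"
  unfolding bounded_op_def
proof (intro conjI ballI allI exI)
  fix f assume f: "f \<in> C1"
  show "comp_op f \<in> C1" using comp_op_PP[OF f] PP_C1(1)[OF f] by simp
  show "c1norm (comp_op f) \<le> 1 * c1norm f" using comp_op_PP[OF f] PP_norm[OF f] by simp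
next
  fix f g :: "real \<Rightarrow> real" and a :: real
  show "comp_op (\<lambda>x. a * f x + g x) = (\<lambda>x. a * comp_op f x + comp_op g x)"
    unfolding comp_op_def by (rule ext) simp
qed

lemma unital_comp_op: "unital_endo comp_op"
  unfolding unital_endo_def
proof (intro conjI ballI bounded_comp_op)
  fix f g :: "real \<Rightarrow> real"
  show "comp_op (\<lambda>x. f x * g x) = (\<lambda>x. comp_op f x * comp_op g x)"
    unfolding comp_op_def by (rule ext) simp
next
  have "\<And>x. x \<in> {0..1} \<Longrightarrow> x^2/2 \<in> {0..1::real}"
    by (auto intro: order_trans[OF power_le_one])
  then show "comp_op one_C1 = one_C1"
    unfolding comp_op_def one_C1_def by (intro ext) auto
qed

lemma const_C1: "(\<lambda>x. c * one_C1 x) \<in> C1" "\<And>x. x \<in> {0..1} \<Longrightarrow> c1deriv (\<lambda>x. c * one_C1 x) x = 0"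
    "c1norm (\<lambda>x. c * one_C1 x) \<le> \<bar>c\<bar>"
proof -
  have d: "((\<lambda>x. c * one_C1 x) has_vector_derivative 0) (at x within {0..1})" if "x \<in> {0..1}" for x
    by (rule has_vector_derivative_transform[OF that _ has_vector_derivative_const[of c]])
       (simp add: one_C1_def)
  have z: "\<And>x. x \<notin> {0..1} \<Longrightarrow> c * one_C1 x = 0" unfolding one_C1_def by (simp only: if_False mult_zero_right)
  show "(\<lambda>x. c * one_C1 x) \<in> C1" by (rule C1_intro(1)[OF d _ z]) auto
  show "\<And>x. x \<in> {0..1} \<Longrightarrow> c1deriv (\<lambda>x. c * one_C1 x) x = 0" by (rule C1_intro(2)[OF d _ z]) auto
  have "c1norm (\<lambda>x. c * one_C1 x) \<le> \<bar>c\<bar> + 0"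
    by (rule c1norm_le[OF d]) (auto simp: one_C1_def)
  then show "c1norm (\<lambda>x. c * one_C1 x) \<le> \<bar>c\<bar>" by simp
qed

definition K0 :: "(real \<Rightarrow> real) \<Rightarrow> real \<Rightarrow> real" where
  "K0 f = (\<lambda>x. f 0 * one_C1 x)"

lemma compact_K0: "compact_C1op K0"
  unfolding compact_C1op_def
proof (intro conjI allI impI)
  show "bounded_op K0"
    unfolding bounded_op_def
  proof (intro conjI ballI allI exI)
    fix f assume f: "f \<in> C1"
    show "K0 f \<in> C1" unfolding K0_def by (rule const_C1)
    have "c1norm (K0 f) \<le> \<bar>f 0\<bar>" unfolding K0_def by (rule const_C1)
    also have "\<dots> \<le> c1norm f" using C1_norm_pt(1)[OF f, of 0] by simp
    finally show "c1norm (K0 f) \<le> 1 * c1norm f" by simp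
  next
    fix f g :: "real \<Rightarrow> real" and a :: real
    show "K0 (\<lambda>x. a * f x + g x) = (\<lambda>x. a * K0 f x + K0 g x)"
      unfolding K0_def by (rule ext) (simp add: algebra_simps)
  qed
next
  fix u :: "nat \<Rightarrow> real \<Rightarrow> real"
  assume u: "\<forall>n. u n \<in> C1 \<and> c1norm (u n) \<le> 1"
  have "\<forall>n. u n 0 \<in> {-1..1}"
  proof
    fix n have "\<bar>u n 0\<bar> \<le> c1norm (u n)" using u C1_norm_pt(1)[of "u n" 0] by auto
    then have "\<bar>u n 0\<bar> \<le> 1" using u by (meson order_trans)
    then show "u n 0 \<in> {-1..1}" by (simp add: abs_le_iff)
  qed
  then have "bounded (range (\<lambda>n. u n 0))"
    by (intro bounded_subset[OF compact_imp_bounded[OF compact_Icc]]) auto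
  then obtain l r where r: "strict_mono r" and l: "((\<lambda>n. u n 0) \<circ> r) \<longlonglongrightarrow> l"
    using bounded_imp_convergent_subsequence by blast
  have eq: "(\<lambda>x. K0 (u (r n)) x - l * one_C1 x) = (\<lambda>x. (u (r n) 0 - l) * one_C1 x)" for n
    unfolding K0_def by (rule ext) (simp add: algebra_simps)
  have "(\<lambda>n. c1norm (\<lambda>x. K0 (u (r n)) x - l * one_C1 x)) \<longlonglongrightarrow> 0"
    unfolding eq
  proof (rule tendsto_sandwich[where f="\<lambda>n. 0" and h="\<lambda>n. \<bar>u (r n) 0 - l\<bar>"])
    show "\<forall>\<^sub>F n in sequentially. 0 \<le> c1norm (\<lambda>x. (u (r n) 0 - l) * one_C1 x)"
      using C1_norm_nonneg[OF const_C1(1)] by simp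
    show "\<forall>\<^sub>F n in sequentially. c1norm (\<lambda>x. (u (r n) 0 - l) * one_C1 x) \<le> \<bar>u (r n) 0 - l\<bar>"
      using const_C1(3) by simp
    have "(\<lambda>n. u (r n) 0 - l) \<longlonglongrightarrow> 0" using l by (simp add: LIM_zero comp_def)
    then show "(\<lambda>n. \<bar>u (r n) 0 - l\<bar>) \<longlonglongrightarrow> 0" by (rule tendsto_rabs_zero)
  qed simp
  then show "\<exists>(r::nat \<Rightarrow> nat) g. strict_mono r \<and> g \<in> C1 \<and>
               (\<lambda>n. c1norm (\<lambda>x. K0 (u (r n)) x - g x)) \<longlonglongrightarrow> 0"
    using r const_C1(1) by blast
qed



lemma zero_C1: "(\<lambda>x. 0 * one_C1 x) \<in> C1" "c1norm (\<lambda>x. 0 * one_C1 x) \<le> 1"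
  using const_C1[of 0] by auto

lemma opnorm_props:
  assumes T1: "\<And>f. f \<in> C1 \<Longrightarrow> T f \<in> C1" and T2: "\<And>f. f \<in> C1 \<Longrightarrow> c1norm (T f) \<le> c1norm f"
    and K: "bounded_op K"
  shows "0 \<le> opnorm (\<lambda>f x. T f x - K f x)"
    and "(\<And>f. f \<in> C1 \<Longrightarrow> c1norm f \<le> 1 \<Longrightarrow> c1norm (\<lambda>x. T f x - K f x) \<le> c)
          \<Longrightarrow> opnorm (\<lambda>f x. T f x - K f x) \<le> c"
proof -
  define Z where "Z = {c1norm (\<lambda>x. T f x - K f x) | f. f \<in> C1 \<and> c1norm f \<le> 1}"
  have op: "opnorm (\<lambda>f x. T f x - K f x) = Sup Z" unfolding opnorm_def Z_def by simp
  obtain C where C: "\<And>f. f \<in> C1 \<Longrightarrow> c1norm (K f) \<le> C * c1norm f" and K1: "\<And>f. f \<in> C1 \<Longrightarrow> K f \<in> C1"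
    using K unfolding bounded_op_def by blast
  have ne: "c1norm (\<lambda>x. T (\<lambda>x. 0 * one_C1 x) x - K (\<lambda>x. 0 * one_C1 x) x) \<in> Z"
    unfolding Z_def using zero_C1 by blast
  have bdd: "bdd_above Z" unfolding bdd_above_def
  proof (intro exI ballI)
    fix z assume "z \<in> Z"
    then obtain f where f: "f \<in> C1" "c1norm f \<le> 1" and z: "z = c1norm (\<lambda>x. T f x - K f x)"
      unfolding Z_def by blast
    have "z \<le> c1norm (T f) + c1norm (K f)" unfolding z by (rule c1norm_triangle[OF T1 K1]) (use f in auto)
    also have "\<dots> \<le> 1 + \<bar>C\<bar>"
    proof -
      have "c1norm (T f) \<le> 1" using T2[OF f(1)] f(2) by linarith
      moreover have "C * c1norm f \<le> \<bar>C\<bar>"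
      proof -
        have "C * c1norm f \<le> \<bar>C\<bar> * c1norm f" using C1_norm_nonneg[OF f(1)]
          by (intro mult_right_mono) auto
        also have "\<dots> \<le> \<bar>C\<bar> * 1" using f(2) by (intro mult_left_mono) auto
        finally show ?thesis by simp
      qed
      ultimately show ?thesis using C[OF f(1)] by linarith
    qed
    finally show "z \<le> 1 + \<bar>C\<bar>" .
  qed
  have "0 \<le> c1norm (\<lambda>x. T (\<lambda>x. 0 * one_C1 x) x - K (\<lambda>x. 0 * one_C1 x) x)"
    by (intro C1_norm_nonneg C1_diff T1 K1 zero_C1)
  also have "\<dots> \<le> Sup Z" by (rule cSup_upper[OF ne bdd])
  finally show "0 \<le> opnorm (\<lambda>f x. T f x - K f x)" unfolding op .
  assume H: "\<And>f. f \<in> C1 \<Longrightarrow> c1norm f \<le> 1 \<Longrightarrow> c1norm (\<lambda>x. T f x - K f x) \<le> c"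
  have "Sup Z \<le> c" using ne H by (intro cSup_least) (auto simp: Z_def)
  then show "opnorm (\<lambda>f x. T f x - K f x) \<le> c" unfolding op .
qed

lemma essnorm_props:
  assumes T1: "\<And>f. f \<in> C1 \<Longrightarrow> T f \<in> C1" and T2: "\<And>f. f \<in> C1 \<Longrightarrow> c1norm (T f) \<le> c1norm f"
  shows "0 \<le> essnorm T" "essnorm T \<le> opnorm (\<lambda>f x. T f x - K0 f x)"
proof -
  define S where "S = {opnorm (\<lambda>f x. T f x - K f x) | K. compact_C1op K}"
  have e: "essnorm T = Inf S" unfolding essnorm_def S_def ..
  have ne: "opnorm (\<lambda>f x. T f x - K0 f x) \<in> S" unfolding S_def using compact_K0 by blast
  have lb: "\<And>s. s \<in> S \<Longrightarrow> 0 \<le> s" unfolding S_def compact_C1op_def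
    using opnorm_props(1)[OF T1 T2] by blast
  show "0 \<le> essnorm T" unfolding e using ne lb by (intro cInf_greatest) auto
  have "bdd_below S" using lb by (auto simp: bdd_below_def)
  then show "essnorm T \<le> opnorm (\<lambda>f x. T f x - K0 f x)" unfolding e by (rule cInf_lower[OF ne])
qed

lemma comp_pow_bound: "opnorm (\<lambda>f x. (comp_op ^^ n) f x - K0 f x) \<le> 2 * BB n"
proof (rule opnorm_props(2))
  show "\<And>f. f \<in> C1 \<Longrightarrow> (comp_op ^^ n) f \<in> C1" using comp_op_pow PP_C1(1) by simp
  show "\<And>f. f \<in> C1 \<Longrightarrow> c1norm ((comp_op ^^ n) f) \<le> c1norm f" using comp_op_pow PP_norm by simp
  show "bounded_op K0" using compact_K0 unfolding compact_C1op_def by blast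
  fix f assume f: "f \<in> C1" "c1norm f \<le> 1"
  have dn: "\<And>z. z \<in> {0..1} \<Longrightarrow> \<bar>c1deriv f z\<bar> \<le> 1" using C1_norm_pt(2)[OF f(1)] f(2) by force
  have "c1norm (\<lambda>x. PP n f x - K0 f x) \<le> BB n + BB n"
  proof (rule c1norm_le)
    fix x :: real assume x: "x \<in> {0..1}"
    show "((\<lambda>x. PP n f x - K0 f x) has_vector_derivative c1deriv f (phi n x) * phd n x - 0) (at x within {0..1})"
      unfolding K0_def
      using C1_deriv[OF PP_C1(1)[OF f(1)] x] PP_C1(2)[OF f(1) x]
        C1_deriv[OF const_C1(1) x] const_C1(2)[OF x]
      by (intro has_vector_derivative_diff) auto
    have "norm (f (phi n x) - f 0) \<le> 1 * norm (phi n x - 0)"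
    proof (rule field_differentiable_bound[where S="{0..1}" and f'="c1deriv f"])
      show "\<And>z. z \<in> {0..1} \<Longrightarrow> (f has_field_derivative c1deriv f z) (at z within {0..1})"
        using C1_deriv[OF f(1)] by (simp add: has_real_derivative_iff_has_vector_derivative)
    qed (use dn phi_in_I[OF x] in auto)
    then show "\<bar>PP n f x - K0 f x\<bar> \<le> BB n"
      using x phi_BB[OF x, of n] phi_I[OF x, of n] by (simp add: PP_def K0_def one_C1_def)
    have "\<bar>c1deriv f (phi n x) * phd n x\<bar> \<le> 1 * BB n"
      unfolding abs_mult using phi_BB[OF x, of n] dn[OF phi_in_I[OF x]]
      by (intro mult_mono) auto
    then show "\<bar>c1deriv f (phi n x) * phd n x - 0\<bar> \<le> BB n" by simp
  qed
  then show "c1norm (\<lambda>x. (comp_op ^^ n) f x - K0 f x) \<le> 2 * BB n"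
    using comp_op_pow[OF f(1)] by simp
qed

lemma riesz_comp_op: "riesz_op comp_op"
  unfolding riesz_op_def
proof (intro conjI bounded_comp_op)
  have T1: "\<And>f. f \<in> C1 \<Longrightarrow> (comp_op ^^ n) f \<in> C1" for n using comp_op_pow PP_C1(1) by simp
  have T2: "\<And>f. f \<in> C1 \<Longrightarrow> c1norm ((comp_op ^^ n) f) \<le> c1norm f" for n using comp_op_pow PP_norm by simp
  have lim: "(\<lambda>n::nat. (2 * (1/2) powr (real n * (real n - 1)/2)) powr (1/real n)) \<longlonglongrightarrow> 0"
    by real_asymp
  show "(\<lambda>n. root n (essnorm (comp_op ^^ n))) \<longlonglongrightarrow> 0"
  proof (rule tendsto_sandwich[OF _ _ tendsto_const lim])
    show "\<forall>\<^sub>F n in sequentially. 0 \<le> root n (essnorm (comp_op ^^ n))"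
    proof (intro always_eventually allI real_root_ge_zero)
      fix n show "0 \<le> essnorm (comp_op ^^ n)"
        by (rule essnorm_props(1)[of "comp_op ^^ n"]) (use T1 T2 in auto)
    qed
    have "root n (essnorm (comp_op ^^ n)) \<le> (2 * (1/2) powr (real n * (real n - 1)/2)) powr (1/real n)"
      if n: "n \<ge> 1" for n
    proof -
      have "essnorm (comp_op ^^ n) \<le> 2 * BB n"
        using essnorm_props(2)[of "comp_op ^^ n", OF T1 T2] comp_pow_bound[of n] by linarith
      then have "root n (essnorm (comp_op ^^ n)) \<le> root n (2 * BB n)"
        using n by (intro real_root_le_mono) auto
      also have "\<dots> = (2 * BB n) powr (1/real n)" using n BB_pos[of n]
        by (intro root_powr_inverse) auto
      finally show ?thesis by (simp add: BB_def)
    qed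
    then show "\<forall>\<^sub>F n in sequentially. root n (essnorm (comp_op ^^ n)) \<le> (2 * (1/2) powr (real n * (real n - 1)/2)) powr (1/real n)"
      by (rule eventually_mono[OF eventually_ge_at_top[of 1]])
  qed
qed



definition uu :: "real \<Rightarrow> nat \<Rightarrow> real \<Rightarrow> real" where
  "uu b k = (\<lambda>t. if t \<in> {0..1} then arctan (real (Suc k) * (t - b)) / (3 * real (Suc k)) else 0)"

definition ud :: "real \<Rightarrow> nat \<Rightarrow> real \<Rightarrow> real" where
  "ud b k = (\<lambda>t. 1 / (3 * (1 + (real (Suc k) * (t - b))^2)))"

lemma arctan_deriv_aux:
  fixes c b t :: real assumes "c > 0"
  shows "((\<lambda>t. arctan(c*(t-b))/(3*c)) has_real_derivative 1/(3*(1+(c*(t-b))^2))) (at t)"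
proof -
  have p: "0 < 3 + 3 * (c*t - b*c)^2" by (simp add: add_pos_nonneg)
  have q: "c*(c*9) + c*(c*(9*(c*t-b*c)^2)) > 0" using assms by (intro add_pos_nonneg) auto
  show ?thesis
  using assms p q by (auto intro!: derivative_eq_intros simp: field_simps)
qed

lemma uu_C1: "uu b k \<in> C1" "\<And>x. x \<in> {0..1} \<Longrightarrow> c1deriv (uu b k) x = ud b k x" "c1norm (uu b k) \<le> 1"
proof -
  have d: "(uu b k has_vector_derivative ud b k x) (at x within {0..1})" if x: "x \<in> {0..1}" for x
  proof -
    have "((\<lambda>t. arctan (real (Suc k) * (t - b)) / (3 * real (Suc k))) has_vector_derivative ud b k x) (at x within {0..1})"
      using arctan_deriv_aux[of "real (Suc k)" b x]
      unfolding ud_def has_real_derivative_iff_has_vector_derivative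
      by (auto intro: has_vector_derivative_at_within)
    then show ?thesis
      by (rule has_vector_derivative_transform[OF x, rotated]) (simp add: uu_def)
  qed
  have c: "continuous_on {0..1} (ud b k)" unfolding ud_def
    by (auto intro!: continuous_intros) (smt (verit) zero_le_power2)
  have z: "\<And>x. x \<notin> {0..1} \<Longrightarrow> uu b k x = 0" unfolding uu_def by (simp only: if_False)
  show "uu b k \<in> C1" by (rule C1_intro(1)[OF d c z])
  show "\<And>x. x \<in> {0..1} \<Longrightarrow> c1deriv (uu b k) x = ud b k x" by (rule C1_intro(2)[OF d c z])
  have "c1norm (uu b k) \<le> 2/3 + 1/3"
  proof (rule c1norm_le[OF d])
    fix x :: real assume x: "x \<in> {0..1}"
    have a: "\<bar>arctan (real (Suc k) * (x - b))\<bar> \<le> 2"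
      using arctan_bounded[of "real (Suc k) * (x - b)"] pi_less_4 by linarith
    have "\<bar>arctan (real (Suc k) * (x - b)) / (3 * real (Suc k))\<bar> = \<bar>arctan (real (Suc k) * (x - b))\<bar> / (3 * real (Suc k))"
      by (simp add: abs_divide)
    also have "\<dots> \<le> 2 / (3 * real (Suc k))" using a by (intro divide_right_mono) auto
    also have "\<dots> \<le> 2 / 3" by (intro divide_left_mono) auto
    finally show "\<bar>uu b k x\<bar> \<le> 2/3" using x by (simp add: uu_def)
    have y: "1 \<le> 1 + (real (Suc k) * (x - b))^2" by simp
    then have "1 / (3 * (1 + (real (Suc k) * (x - b))^2)) \<le> 1 / (3 * 1)"
      by (intro divide_left_mono mult_left_mono) (auto intro!: mult_pos_pos add_pos_nonneg)
    moreover have "0 \<le> 1 / (3 * (1 + (real (Suc k) * (x - b))^2))" using y by simp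
    ultimately show "\<bar>ud b k x\<bar> \<le> 1/3" unfolding ud_def by simp
  qed
  then show "c1norm (uu b k) \<le> 1" by simp
qed

lemma ud_lim: fixes d c :: real assumes "d \<noteq> 0"
  shows "(\<lambda>k::nat. 1/(3*(1+(real (Suc k)*d)^2)) * c) \<longlonglongrightarrow> 0"
proof -
  have "d^2 > 0" using assms by simp
  then have "(\<lambda>k::nat. 1/(3*(1+(real k+1)^2*d^2)) * c) \<longlonglongrightarrow> 0" by real_asymp
  then show ?thesis by (simp add: power_mult_distrib add.commute)
qed

lemma not_pc: "\<not> power_compact comp_op"
proof
  assume "power_compact comp_op"
  then obtain N where "compact_C1op (comp_op ^^ N)" unfolding power_compact_def by blast
  then have "\<forall>u::nat \<Rightarrow> real \<Rightarrow> real. (\<forall>n. u n \<in> C1 \<and> c1norm (u n) \<le> 1) \<longrightarrow>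
        (\<exists>(r::nat \<Rightarrow> nat) g. strict_mono r \<and> g \<in> C1 \<and>
               (\<lambda>n. c1norm (\<lambda>x. (comp_op ^^ N) (u (r n)) x - g x)) \<longlonglongrightarrow> 0)"
    unfolding compact_C1op_def by blast
  note cpt = this
  define b where "b = phi N 1"
  from cpt[rule_format, of "uu b"] uu_C1
  obtain r g where r: "strict_mono r" and g: "g \<in> C1"
    and lim: "(\<lambda>n. c1norm (\<lambda>x. (comp_op ^^ N) (uu b (r n)) x - g x)) \<longlonglongrightarrow> 0" by blast
  have eqP: "(comp_op ^^ N) (uu b k) = PP N (uu b k)" for k by (rule comp_op_pow[OF uu_C1(1)])
  define D where "D k x = ud b k (phi N x) * phd N x" for k x
  have Dd: "c1deriv (PP N (uu b k)) x = D k x" if "x \<in> {0..1}" for k x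
    using PP_C1(2)[OF uu_C1(1) that] uu_C1(2)[OF phi_in_I[OF that]] by (simp add: D_def)
  have conv: "(\<lambda>n. D (r n) x) \<longlonglongrightarrow> c1deriv g x" if x: "x \<in> {0..1}" for x
  proof -
    have "(\<lambda>n. D (r n) x - c1deriv g x) \<longlonglongrightarrow> 0"
    proof (rule Lim_null_comparison[OF _ lim])
      show "\<forall>\<^sub>F n in sequentially. norm (D (r n) x - c1deriv g x) \<le> c1norm (\<lambda>x. (comp_op ^^ N) (uu b (r n)) x - g x)"
      proof (intro always_eventually allI)
        fix n
        have h: "(\<lambda>x. PP N (uu b (r n)) x - g x) \<in> C1" by (intro C1_diff PP_C1 uu_C1 g)
        have "c1deriv (\<lambda>x. PP N (uu b (r n)) x - g x) x = D (r n) x - c1deriv g x"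
          using C1_diff(2)[OF PP_C1(1)[OF uu_C1(1)] g x] Dd[OF x] by simp
        then show "norm (D (r n) x - c1deriv g x) \<le> c1norm (\<lambda>x. (comp_op ^^ N) (uu b (r n)) x - g x)"
          using C1_norm_pt(2)[OF h x] by (simp add: eqP)
      qed
    qed
    then show ?thesis by (simp add: LIM_zero_iff)
  qed
  have zero: "c1deriv g x = 0" if x: "0 \<le> x" "x < 1" for x
  proof -
    have "phi N x - b \<noteq> 0" using phi_lt1[OF x, of N] by (simp add: b_def)
    from ud_lim[OF this, of "phd N x"]
    have "(\<lambda>k. D k x) \<longlonglongrightarrow> 0" by (simp add: D_def ud_def)
    then have "(\<lambda>n. D (r n) x) \<longlonglongrightarrow> 0" using LIMSEQ_subseq_LIMSEQ[OF _ r] by (simp add: comp_def)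
    moreover have "(\<lambda>n. D (r n) x) \<longlonglongrightarrow> c1deriv g x" using conv x by simp
    ultimately show ?thesis using LIMSEQ_unique by blast
  qed
  have one: "c1deriv g 1 = phd N 1 / 3"
  proof -
    have "(\<lambda>n. D (r n) 1) = (\<lambda>n. phd N 1 / 3)" by (simp add: D_def ud_def b_def)
    then show ?thesis using conv[of 1] LIMSEQ_unique[OF _ tendsto_const] by fastforce
  qed
  have "continuous_on {0..1} (c1deriv g)" using g unfolding C1_def by blast
  moreover have "(\<lambda>j. 1 - 1/real(Suc (Suc j))) \<longlonglongrightarrow> 1" by real_asymp
  ultimately have "(\<lambda>j. c1deriv g (1 - 1/real(Suc (Suc j)))) \<longlonglongrightarrow> c1deriv g 1"
    by (rule continuous_on_tendsto_compose) (auto intro!: always_eventually simp: field_simps)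
  moreover have "(\<lambda>j. c1deriv g (1 - 1/real(Suc (Suc j)))) = (\<lambda>j. 0)"
    by (rule ext, rule zero) (auto simp: field_simps)
  ultimately have "c1deriv g 1 = 0" using LIMSEQ_unique[OF tendsto_const] by fastforce
  with one phd_pos1[of N] show False by simp
qed

theorem corollary3p2:
  shows "(\<exists>T. unital_endo T \<and> riesz_op T \<and> \<not> power_compact T)
       \<and> (unital_endo comp_op \<and> riesz_op comp_op \<and> \<not> power_compact comp_op)"
  using unital_comp_op riesz_comp_op not_pc by blast

end
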